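(* Let $p,r\in\mathbb{C}$ with $p$ not a root of unity. For all integers $m,n\ge 0$, $$H_{m,n}(x,y;p,r)=\sum_{k=0}^{\min(m,n)}\frac{(-1)^k p^{\binom{k}{2}}(p;p)_m(p;p)_n\,r^k}{(p;p)_{m-k}(p;p)_{n-k}(p;p)_k}\,H_{m-k}(x;p)\,H_{n-k}(y;p).$$ In particular $H_{m,n}(x,y;p,r)=H_{n,m}(y,x;p,r)$ for all $m,n\ge 0$.
   Context: For $a,p\in\mathbb{C}$ let $(a;p)_0=1$ and $(a;p)_k=\prod_{l=0}^{k-1}(1-ap^l)$. The continuous $p$-Hermite polynomials $H_n(x;p)\in\mathbb{C}[x]$ are defined by $H_{-1}(x;p)=0$, $H_0(x;p)=1$ and $H_{n+1}(x;p)=2xH_n(x;p)-(1-p^n)H_{n-1}(x;p)$ for $n\ge0$. The bivariate continuous $p$-Hermite polynomials $H_{m,n}(x,y;p,r)\in\mathbb{C}[x,y]$, $m,n\ge 0$, are defined by setting $H_{-1,n}=H_{m,-1}=0$, $H_{0,n}(x,y;p,r)=H_n(y;p)$, and, for all $m,n\ge0$, $$H_{m+1,n}(x,y;p,r)=2xH_{m,n}(x,y;p,r)-(1-p^m)H_{m-1,n}(x,y;p,r)-p^m(1-p^n)\,r\,H_{m,n-1}(x,y;p,r).$$ *)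

theory Defs
  imports Complex_Main
begin

definition qpoch :: "complex \<Rightarrow> complex \<Rightarrow> nat \<Rightarrow> complex" where
  "qpoch a p k = (\<Prod>l<k. 1 - a * p ^ l)"

fun hermH :: "nat \<Rightarrow> complex \<Rightarrow> complex \<Rightarrow> complex" where
  "hermH 0 x p = 1"
| "hermH (Suc 0) x p = 2 * x"
| "hermH (Suc (Suc n)) x p =
     2 * x * hermH (Suc n) x p - (1 - p ^ Suc n) * hermH n x p"

text \<open>The convention H_{m,-1} = 0 is encoded by the if-then-else; H_{-1,n} = 0 is
  used in the case m = 0 of the recursion.\<close>
fun hermH2 :: "nat \<Rightarrow> nat \<Rightarrow> complex \<Rightarrow> complex \<Rightarrow> complex \<Rightarrow> complex \<Rightarrow> complex" where
  "hermH2 0 n x y p r = hermH n y p"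
| "hermH2 (Suc 0) n x y p r =
     2 * x * hermH2 0 n x y p r - (1 - p ^ 0) * 0
     - p ^ 0 * (1 - p ^ n) * r * (if n = 0 then 0 else hermH2 0 (n - 1) x y p r)"
| "hermH2 (Suc (Suc m)) n x y p r =
     2 * x * hermH2 (Suc m) n x y p r - (1 - p ^ Suc m) * hermH2 m n x y p r
     - p ^ Suc m * (1 - p ^ n) * r * (if n = 0 then 0 else hermH2 (Suc m) (n - 1) x y p r)"

end

theory Submission
  imports Defs
begin

definition AA :: "complex \<Rightarrow> nat \<Rightarrow> nat \<Rightarrow> complex" where
  "AA p m k = (\<Prod>l<k. 1 - p ^ (m - l))"

definition gg :: "complex \<Rightarrow> complex \<Rightarrow> nat \<Rightarrow> complex" where
  "gg p r k = (-1) ^ k * p ^ (k choose 2) * r ^ k / qpoch p p k"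

definition TT :: "complex \<Rightarrow> complex \<Rightarrow> complex \<Rightarrow> complex \<Rightarrow> nat \<Rightarrow> nat \<Rightarrow> nat \<Rightarrow> complex" where
  "TT p r x y m n k = gg p r k * AA p m k * AA p n k * hermH (m - k) x p * hermH (n - k) y p"

lemma AA_zero: "m < k \<Longrightarrow> AA p m k = 0"
  unfolding AA_def by (rule prod_zero) (auto intro!: bexI[of _ m])

lemma AA_Suc: "AA p m (Suc k) = AA p m k * (1 - p ^ (m - k))"
  unfolding AA_def by simp

lemma AA_Suc_Suc: "AA p (Suc m) (Suc k) = (1 - p ^ Suc m) * AA p m k"
  unfolding AA_def by (subst prod.lessThan_Suc_shift) (simp del: prod.lessThan_Suc)

lemma AA_0 [simp]: "AA p m 0 = 1" unfolding AA_def by simp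

lemma AA_pascal: "AA p (Suc M) (Suc k) = AA p M (Suc k) + p ^ (M - k) * (1 - p ^ Suc k) * AA p M k"
proof (cases "k \<le> M")
  case True
  have e: "p ^ k * p ^ (M - k) = p ^ M" using True
    by (simp add: power_add[symmetric])
  have a1: "AA p (Suc M) (Suc k) = (1 - p ^ Suc M) * AA p M k" by (rule AA_Suc_Suc)
  have a2: "AA p M (Suc k) = AA p M k * (1 - p ^ (M - k))" by (rule AA_Suc)
  show ?thesis unfolding a1 a2 using True
    by (simp add: algebra_simps e)
next
  case False
  then show ?thesis by (simp add: AA_zero)
qed

lemma TT_zero: "m < k \<or> n < k \<Longrightarrow> TT p r x y m n k = 0"
  unfolding TT_def by (auto simp: AA_zero)

definition SS where "SS p r x y m n = (\<Sum>k\<le>min m n. TT p r x y m n k)"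

lemma SS_ext: "min m n < N \<Longrightarrow> (\<Sum>k<N. TT p r x y m n k) = SS p r x y m n"
  unfolding SS_def
  by (rule sum.mono_neutral_right) (auto intro!: TT_zero)

context
  fixes p r :: complex
  assumes nr: "\<forall>j::nat. j > 0 \<longrightarrow> p ^ j \<noteq> 1"
begin

lemma fac_nz: "1 - p ^ Suc j \<noteq> 0"
  using nr by auto

lemma qpoch_nz: "qpoch p p k \<noteq> 0"
  unfolding qpoch_def using fac_nz by (auto simp: power_Suc[symmetric] simp del: power_Suc)

lemma qpoch_Suc: "qpoch p p (Suc k) = qpoch p p k * (1 - p ^ Suc k)"
  unfolding qpoch_def by simp

lemma gg_Suc: "gg p r (Suc j) * (1 - p ^ Suc j) = - r * p ^ j * gg p r j"
proof -
  have c: "Suc j choose 2 = j + (j choose 2)"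
    by (simp add: numeral_2_eq_2)
  show ?thesis unfolding gg_def qpoch_Suc c using qpoch_nz[of j] fac_nz[of j]
    by (simp add: field_simps power_add)
qed

lemma qpoch_split: "k \<le> m \<Longrightarrow> qpoch p p m = qpoch p p (m - k) * AA p m k"
proof (induction k)
  case 0 then show ?case by simp
next
  case (Suc k)
  then have "m - k = Suc (m - Suc k)" by simp
  then have "qpoch p p (m - k) = qpoch p p (m - Suc k) * (1 - p ^ (m - k))"
    by (simp add: qpoch_Suc)
  with Suc show ?case by (simp add: AA_Suc)
qed

lemma TT_eq:
  assumes "k \<le> min m n"
  shows "((-1) ^ k * p ^ (k choose 2) * qpoch p p m * qpoch p p n * r ^ k)
               / (qpoch p p (m - k) * qpoch p p (n - k) * qpoch p p k)
               * hermH (m - k) x p * hermH (n - k) y p = TT p r x y m n k"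
proof -
  have m: "qpoch p p m = qpoch p p (m - k) * AA p m k" using assms qpoch_split by simp
  have n: "qpoch p p n = qpoch p p (n - k) * AA p n k" using assms qpoch_split by simp
  show ?thesis unfolding TT_def gg_def m n
    using qpoch_nz[of k] qpoch_nz[of "m-k"] qpoch_nz[of "n-k"] by (simp add: field_simps)
qed

lemma L1: "AA p (Suc m) k * hermH (Suc (Suc m) - k) x p
   = 2 * x * AA p (Suc m) k * hermH (Suc m - k) x p - (1 - p ^ Suc m) * AA p m k * hermH (m - k) x p"
proof -
  consider "k \<le> m" | "k = Suc m" | "k > Suc m" by linarith
  then show ?thesis
  proof cases
    case 1
    then have e1: "Suc (Suc m) - k = Suc (Suc (m - k))" and e2: "Suc m - k = Suc (m - k)" by auto
    have "AA p (Suc m) (Suc k) = (1 - p ^ Suc m) * AA p m k" by (rule AA_Suc_Suc)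
    then have "AA p (Suc m) k * (1 - p ^ Suc (m - k)) = (1 - p ^ Suc m) * AA p m k"
      by (simp add: AA_Suc e2)
    then have F: "AA p (Suc m) k * (1 - p ^ Suc (m - k)) = (1 - p ^ Suc m) * AA p m k" .
    have H: "hermH (Suc (Suc (m-k))) x p = 2*x*hermH (Suc (m-k)) x p - (1 - p^Suc(m-k)) * hermH (m-k) x p"
      by (rule hermH.simps(3))
    have D: "AA p (Suc m) k * (2*x*hermH (Suc (m-k)) x p - (1 - p^Suc(m-k)) * hermH (m-k) x p)
      = 2*x*AA p (Suc m) k * hermH (Suc (m-k)) x p - (AA p (Suc m) k * (1 - p ^ Suc (m - k))) * hermH (m-k) x p"
      by (simp add: algebra_simps)
    show ?thesis unfolding e1 e2 H D F by (simp only: mult.assoc)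
  next
    case 2
    then show ?thesis by (simp add: AA_zero)
  next
    case 3
    then show ?thesis by (simp add: AA_zero)
  qed
qed

lemma P_step: "TT p r x y (Suc (Suc m)) n (Suc j) =
   2 * x * TT p r x y (Suc m) n (Suc j) - (1 - p ^ Suc m) * TT p r x y m n (Suc j)
   - p ^ Suc m * (1 - p ^ n) * r * TT p r x y (Suc m) (n - 1) j"
proof -
  have part1: "gg p r (Suc j) * AA p (Suc m) (Suc j) * AA p n (Suc j) * hermH (Suc (Suc m) - Suc j) x p * hermH (n - Suc j) y p
     = 2 * x * TT p r x y (Suc m) n (Suc j) - (1 - p ^ Suc m) * TT p r x y m n (Suc j)"
  proof -
    let ?G = "gg p r (Suc j) * AA p n (Suc j) * hermH (n - Suc j) y p"
    have "gg p r (Suc j) * AA p (Suc m) (Suc j) * AA p n (Suc j) * hermH (Suc (Suc m) - Suc j) x p * hermH (n - Suc j) y p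
       = ?G * (AA p (Suc m) (Suc j) * hermH (Suc (Suc m) - Suc j) x p)" by (simp only: mult_ac)
    also have "\<dots> = ?G * (2 * x * AA p (Suc m) (Suc j) * hermH (Suc m - Suc j) x p - (1 - p ^ Suc m) * AA p m (Suc j) * hermH (m - Suc j) x p)"
      by (simp only: L1)
    also have "\<dots> = 2 * x * TT p r x y (Suc m) n (Suc j) - (1 - p ^ Suc m) * TT p r x y m n (Suc j)"
      unfolding TT_def right_diff_distrib by (simp only: mult_ac)
    finally show ?thesis .
  qed
  have B: "AA p n (Suc j) = (1 - p ^ n) * AA p (n - 1) j"
    by (cases n) (simp_all add: AA_Suc_Suc AA_zero)
  have part2: "gg p r (Suc j) * (p ^ (Suc m - j) * (1 - p ^ Suc j) * AA p (Suc m) j) * AA p n (Suc j)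
      * hermH (Suc (Suc m) - Suc j) x p * hermH (n - Suc j) y p
     = - (p ^ Suc m * (1 - p ^ n) * r * TT p r x y (Suc m) (n - 1) j)"
  proof (cases "j \<le> Suc m")
    case True
    have pe: "p ^ (Suc m - j) * p ^ j = p ^ Suc m" using True by (simp add: power_add[symmetric])
    have "gg p r (Suc j) * (p ^ (Suc m - j) * (1 - p ^ Suc j) * AA p (Suc m) j)
        = (gg p r (Suc j) * (1 - p ^ Suc j)) * p ^ (Suc m - j) * AA p (Suc m) j" by (simp add: ac_simps)
    also have "\<dots> = - r * gg p r j * (p ^ (Suc m - j) * p ^ j) * AA p (Suc m) j"
      unfolding gg_Suc by (simp add: ac_simps)
    also have "\<dots> = - r * gg p r j * p ^ Suc m * AA p (Suc m) j" unfolding pe ..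
    finally have g: "gg p r (Suc j) * (p ^ (Suc m - j) * (1 - p ^ Suc j) * AA p (Suc m) j) = - r * gg p r j * p ^ Suc m * AA p (Suc m) j" .
    have h: "n - Suc j = n - 1 - j" by simp
    show ?thesis unfolding g B TT_def h by (simp add: ac_simps)
  next
    case False
    then show ?thesis by (simp add: AA_zero TT_def)
  qed
  have "TT p r x y (Suc (Suc m)) n (Suc j) =
     gg p r (Suc j) * AA p (Suc m) (Suc j) * AA p n (Suc j) * hermH (Suc (Suc m) - Suc j) x p * hermH (n - Suc j) y p
     + gg p r (Suc j) * (p ^ (Suc m - j) * (1 - p ^ Suc j) * AA p (Suc m) j) * AA p n (Suc j)
      * hermH (Suc (Suc m) - Suc j) x p * hermH (n - Suc j) y p"
    unfolding TT_def AA_pascal[of p "Suc m" j] by (simp add: algebra_simps)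
  also have "\<dots> = 2 * x * TT p r x y (Suc m) n (Suc j) - (1 - p ^ Suc m) * TT p r x y m n (Suc j)
   - p ^ Suc m * (1 - p ^ n) * r * TT p r x y (Suc m) (n - 1) j"
    unfolding part1 part2 by simp
  finally show ?thesis .
qed

lemma P0: "TT p r x y (Suc (Suc m)) n 0 =
   2 * x * TT p r x y (Suc m) n 0 - (1 - p ^ Suc m) * TT p r x y m n 0"
  unfolding TT_def by (simp add: algebra_simps)

lemma sum_step: "(\<Sum>k<Suc N. TT p r x y (Suc (Suc m)) n k) =
   2 * x * (\<Sum>k<Suc N. TT p r x y (Suc m) n k) - (1 - p ^ Suc m) * (\<Sum>k<Suc N. TT p r x y m n k)
   - p ^ Suc m * (1 - p ^ n) * r * (\<Sum>k<N. TT p r x y (Suc m) (n - 1) k)"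
  unfolding sum.lessThan_Suc_shift P_step P0
  by (simp add: sum.distrib sum_subtractf sum_distrib_left algebra_simps)

lemma SS_rec: "SS p r x y (Suc (Suc m)) n =
   2 * x * SS p r x y (Suc m) n - (1 - p ^ Suc m) * SS p r x y m n
   - p ^ Suc m * (1 - p ^ n) * r * SS p r x y (Suc m) (n - 1)"
proof -
  define N where "N = m + n + 3"
  have "SS p r x y (Suc (Suc m)) n = (\<Sum>k<Suc N. TT p r x y (Suc (Suc m)) n k)"
    by (rule SS_ext[symmetric]) (simp add: N_def)
  also have "\<dots> = 2 * x * (\<Sum>k<Suc N. TT p r x y (Suc m) n k) - (1 - p ^ Suc m) * (\<Sum>k<Suc N. TT p r x y m n k)
   - p ^ Suc m * (1 - p ^ n) * r * (\<Sum>k<N. TT p r x y (Suc m) (n - 1) k)" by (rule sum_step)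
  also have "(\<Sum>k<Suc N. TT p r x y (Suc m) n k) = SS p r x y (Suc m) n" by (rule SS_ext) (simp add: N_def)
  also have "(\<Sum>k<Suc N. TT p r x y m n k) = SS p r x y m n" by (rule SS_ext) (simp add: N_def)
  also have "(\<Sum>k<N. TT p r x y (Suc m) (n - 1) k) = SS p r x y (Suc m) (n - 1)" by (rule SS_ext) (simp add: N_def)
  finally show ?thesis .
qed

lemma SS_0: "SS p r x y 0 n = hermH n y p"
  unfolding SS_def TT_def gg_def qpoch_def by (simp add: numeral_2_eq_2)

lemma SS_1: "SS p r x y (Suc 0) n = 2 * x * hermH n y p - (1 - p ^ n) * r * (if n = 0 then 0 else hermH (n - 1) y p)"
proof -
  have "SS p r x y (Suc 0) n = (\<Sum>k<2. TT p r x y (Suc 0) n k)" by (rule SS_ext[symmetric]) simp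
  also have "\<dots> = TT p r x y (Suc 0) n 0 + TT p r x y (Suc 0) n 1" by (simp add: numeral_2_eq_2)
  finally have e: "SS p r x y (Suc 0) n = TT p r x y (Suc 0) n 0 + TT p r x y (Suc 0) n 1" .
  have g0: "gg p r 0 = 1" unfolding gg_def qpoch_def by (simp add: numeral_2_eq_2)
  have g1: "gg p r 1 * (1 - p) = - r" using gg_Suc[of 0] g0 by simp
  show ?thesis
  proof (cases n)
    case 0 then show ?thesis unfolding e by (simp add: TT_def AA_zero g0)
  next
    case (Suc n')
    have "TT p r x y (Suc 0) n 1 = (gg p r 1 * (1 - p)) * (1 - p ^ n) * hermH (n - 1) y p"
      unfolding TT_def AA_def using Suc by simp
    moreover have "TT p r x y (Suc 0) n 0 = 2 * x * hermH n y p" unfolding TT_def g0 by simp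
    ultimately show ?thesis unfolding e g1 using Suc by simp
  qed
qed

lemma main_eq: "hermH2 m n x y p r = SS p r x y m n"
proof -
  have "\<forall>n. hermH2 m n x y p r = SS p r x y m n \<and> hermH2 (Suc m) n x y p r = SS p r x y (Suc m) n"
  proof (induction m)
    case 0
    then show ?case by (simp add: SS_0 SS_1)
  next
    case (Suc m)
    then show ?case by (auto simp: SS_rec)
  qed
  then show ?thesis by blast
qed

end

theorem mainTheorem1:
  fixes p r :: complex
  assumes not_root_of_unity: "\<forall>j::nat. j > 0 \<longrightarrow> p ^ j \<noteq> 1"
  shows "(\<forall>m n x y. hermH2 m n x y p r =
            (\<Sum>k = 0..min m n.
               ((-1) ^ k * p ^ (k choose 2) * qpoch p p m * qpoch p p n * r ^ k)
               / (qpoch p p (m - k) * qpoch p p (n - k) * qpoch p p k)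
               * hermH (m - k) x p * hermH (n - k) y p))
       \<and> (\<forall>m n x y. hermH2 m n x y p r = hermH2 n m y x p r)"
proof -
  have A: "hermH2 m n x y p r =
            (\<Sum>k = 0..min m n.
               ((-1) ^ k * p ^ (k choose 2) * qpoch p p m * qpoch p p n * r ^ k)
               / (qpoch p p (m - k) * qpoch p p (n - k) * qpoch p p k)
               * hermH (m - k) x p * hermH (n - k) y p)" for m n x y
    unfolding main_eq[OF not_root_of_unity] SS_def atLeast0AtMost
    by (rule sum.cong[OF refl], rule TT_eq[OF not_root_of_unity, symmetric]) simp
  have B: "hermH2 m n x y p r = hermH2 n m y x p r" for m n x y
    unfolding main_eq[OF not_root_of_unity] SS_def TT_def
    by (simp add: min.commute ac_simps)
  show ?thesis using A B by blast
qed

end
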